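(* Let $0<\delta<1$, $0<\varepsilon<1/7$, $2<\alpha<\min(\frac{2}{1-\delta},3)$ and $0<\rho<\min\!\left(\frac{1-\delta}{2},\frac{2-\alpha(1-\delta)}{4}\right)$ be constants, let $p=n^{\delta-1}$, let $H$ be a balanced graph on $m=n^{\rho}$ vertices with average degree $\alpha$ having an independent set of size $k'$, and let $k'\le k\le n-m$. Let $f$ be an arbitrary function mapping $n$-vertex graphs to $\{0,1\}$. Let $p_A=\Pr[f(G)=1]$ for $G\sim A_HG(n,p,k)$ and $p_H=\Pr[f(G)=1]$ for $G\sim G_H(n,p,k)$. Then for every constant $\beta\in[0,1)$ and all sufficiently large $n$, $p_H\ge\beta\left(p_A-\frac{4\varepsilon}{(1-\beta)^2}\right)$.
   Context: A graph with average degree $\alpha$ is balanced if every induced subgraph has average degree at most $\alpha$. $G(n,p)$ is the Erdős–Rényi random graph on vertex set $[n]$. Let $H$ have vertex set $[m]$, $m$ dividing $n$; partition $[n]$ into parts $P_i=\{(i-1)\frac nm+1,\dots,i\frac nm\}$, $1\le i\le m$. A set $S=\{v_1,\dots,v_m\}$ with $v_i\in P_i$ obeys the partition; it is an induced copy of $H$ obeying the partition in a graph $F$ if $i\mapsto v_i$ is an isomorphism from $H$ onto $F[S]$. Distribution $G_H(n,p,k)$: sample $G'\sim G(n,p)$; choose a uniformly random $M=\{v_1,\dots,v_m\}$ obeying the partition and replace $G'[M]$ by $H$ (vertex $i$ placed at $v_i$), giving $G_H$; among the vertices with no neighbor in $M$ choose a uniformly random set $I'$ of size $k-k'$ and delete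 all edges inside $I'$; if there are fewer than $k-k'$ such vertices, instead delete all edges inside a uniformly random set of $k$ vertices of $G_H$. Distribution $A_HG(n,p,k)$: sample $G'\sim G(n,p)$; choose uniformly at random one induced copy $S$ of $H$ in $G'$ obeying the partition; among the vertices with no neighbor in $S$ choose a uniformly random set of size $k-k'$ and delete all edges inside it; if no such copy exists or there are fewer than $k-k'$ such vertices, instead delete all edges inside a uniformly random set of $k$ vertices of $G'$. *)

theory Defs
  imports "HOL-Probability.Probability"
begin

text \<open>Simple graphs on vertex set [n] = {1..n} are represented by their edge sets,
  sets of 2-element subsets of {1..n}.\<close>

definition all_edges :: "nat \<Rightarrow> nat set set" where
  "all_edges n = {e. \<exists>u v. u \<in> {1..n} \<and> v \<in> {1..n} \<and> u \<noteq> v \<and> e = {u, v}}"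

definition gnp :: "nat \<Rightarrow> real \<Rightarrow> nat set set pmf" where
  "gnp n p = map_pmf (\<lambda>b. {e \<in> all_edges n. b e})
                     (Pi_pmf (all_edges n) False (\<lambda>_. bernoulli_pmf p))"

definition avg_deg :: "nat set set \<Rightarrow> nat set \<Rightarrow> real" where
  "avg_deg E S = 2 * real (card {e \<in> E. e \<subseteq> S}) / real (card S)"

definition balanced_graph :: "nat \<Rightarrow> nat set set \<Rightarrow> real \<Rightarrow> bool" where
  "balanced_graph m EH \<alpha> \<longleftrightarrow> EH \<subseteq> all_edges m \<and> avg_deg EH {1..m} = \<alpha> \<and>
     (\<forall>S. S \<subseteq> {1..m} \<and> S \<noteq> {} \<longrightarrow> avg_deg EH S \<le> \<alpha>)"

definition has_indep_set :: "nat \<Rightarrow> nat set set \<Rightarrow> nat \<Rightarrow> bool" where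
  "has_indep_set m EH k' \<longleftrightarrow> (\<exists>I. I \<subseteq> {1..m} \<and> card I = k' \<and> (\<forall>e \<in> EH. \<not> e \<subseteq> I))"

definition part :: "nat \<Rightarrow> nat \<Rightarrow> nat \<Rightarrow> nat set" where
  "part n m i = {(i - 1) * (n div m) + 1 .. i * (n div m)}"

text \<open>Tuples (v_1,...,v_m) with v_i in P_i (sets obeying the partition, with the map i -> v_i).\<close>
definition obeying :: "nat \<Rightarrow> nat \<Rightarrow> (nat \<Rightarrow> nat) set" where
  "obeying n m = PiE {1..m} (part n m)"

definition plant :: "nat \<Rightarrow> nat set set \<Rightarrow> (nat \<Rightarrow> nat) \<Rightarrow> nat set set \<Rightarrow> nat set set" where
  "plant m EH vs E = {e \<in> E. \<not> e \<subseteq> vs ` {1..m}} \<union> {{vs i, vs j} | i j. {i, j} \<in> EH}"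

definition del_inside :: "nat set set \<Rightarrow> nat set \<Rightarrow> nat set set" where
  "del_inside E I = {e \<in> E. \<not> e \<subseteq> I}"

definition nonadj :: "nat \<Rightarrow> nat set set \<Rightarrow> nat set \<Rightarrow> nat set" where
  "nonadj n E M = {u \<in> {1..n}. \<forall>w \<in> M. {u, w} \<notin> E}"

definition ksets :: "nat set \<Rightarrow> nat \<Rightarrow> nat set set" where
  "ksets V k = {I. I \<subseteq> V \<and> card I = k}"

definition finish :: "nat \<Rightarrow> nat \<Rightarrow> nat \<Rightarrow> nat set set \<Rightarrow> nat set \<Rightarrow> nat set set pmf" where
  "finish n k k' E M =
     (if k - k' \<le> card (nonadj n E M)
      then map_pmf (del_inside E) (pmf_of_set (ksets (nonadj n E M) (k - k')))
      else map_pmf (del_inside E) (pmf_of_set (ksets {1..n} k)))"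

definition GH_dist :: "nat \<Rightarrow> real \<Rightarrow> nat \<Rightarrow> nat set set \<Rightarrow> nat \<Rightarrow> nat \<Rightarrow> nat set set pmf" where
  "GH_dist n p m EH k k' =
     bind_pmf (gnp n p) (\<lambda>E'.
     bind_pmf (pmf_of_set (obeying n m)) (\<lambda>vs.
       finish n k k' (plant m EH vs E') (vs ` {1..m})))"

definition induced_copies :: "nat \<Rightarrow> nat \<Rightarrow> nat set set \<Rightarrow> nat set set \<Rightarrow> (nat \<Rightarrow> nat) set" where
  "induced_copies n m EH E = {vs \<in> obeying n m.
     \<forall>i \<in> {1..m}. \<forall>j \<in> {1..m}. i \<noteq> j \<longrightarrow> ({i, j} \<in> EH \<longleftrightarrow> {vs i, vs j} \<in> E)}"

definition AHG_dist :: "nat \<Rightarrow> real \<Rightarrow> nat \<Rightarrow> nat set set \<Rightarrow> nat \<Rightarrow> nat \<Rightarrow> nat set set pmf" where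
  "AHG_dist n p m EH k k' =
     bind_pmf (gnp n p) (\<lambda>E'.
       if induced_copies n m EH E' = {}
       then map_pmf (del_inside E') (pmf_of_set (ksets {1..n} k))
       else bind_pmf (pmf_of_set (induced_copies n m EH E')) (\<lambda>vs.
              finish n k k' E' (vs ` {1..m})))"

end

theory Submission
  imports Defs
begin



definition wt :: "real \<Rightarrow> 'a set \<Rightarrow> 'a set \<Rightarrow> real" where
  "wt p X E = p ^ card E * (1 - p) ^ (card X - card E)"

lemma Pow_insert_sum:
  assumes "finite F" "x \<notin> F"
  shows "(\<Sum>S\<in>Pow (insert x F). g S) = (\<Sum>S\<in>Pow F. g S) + (\<Sum>S\<in>Pow F. g (insert x S))"
proof -
  have "Pow (insert x F) = Pow F \<union> insert x ` Pow F" by (rule Pow_insert)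
  moreover have "Pow F \<inter> insert x ` Pow F = {}" using assms by auto
  moreover have "inj_on (insert x) (Pow F)" using assms by (intro inj_onI) (metis Pow_iff insert_ident subsetD)
  ultimately show ?thesis using assms
    by (simp add: sum.union_disjoint sum.reindex)
qed

lemma pow_sum:
  fixes a b :: real
  assumes "finite X"
  shows "(\<Sum>S\<in>Pow X. a ^ card S * b ^ (card X - card S)) = (a + b) ^ card X"
  using assms
proof (induction X rule: finite_induct)
  case empty
  then show ?case by simp
next
  case (insert x F)
  have c1: "\<And>S. S \<in> Pow F \<Longrightarrow> a ^ card S * b ^ (card (insert x F) - card S) = b * (a ^ card S * b ^ (card F - card S))"
  proof -
    fix S assume "S \<in> Pow F"
    then have "card S \<le> card F" using insert by (simp add: card_mono)
    then have "card (insert x F) - card S = Suc (card F - card S)" using insert by simp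
    then show "a ^ card S * b ^ (card (insert x F) - card S) = b * (a ^ card S * b ^ (card F - card S))" by simp
  qed
  have c2: "\<And>S. S \<in> Pow F \<Longrightarrow> a ^ card (insert x S) * b ^ (card (insert x F) - card (insert x S)) = a * (a ^ card S * b ^ (card F - card S))"
  proof -
    fix S assume S: "S \<in> Pow F"
    then have "finite S" "x \<notin> S" using insert finite_subset by auto
    then show "a ^ card (insert x S) * b ^ (card (insert x F) - card (insert x S)) = a * (a ^ card S * b ^ (card F - card S))"
      using insert by simp
  qed
  have "(\<Sum>S\<in>Pow (insert x F). a ^ card S * b ^ (card (insert x F) - card S))
     = (\<Sum>S\<in>Pow F. b * (a ^ card S * b ^ (card F - card S))) + (\<Sum>S\<in>Pow F. a * (a ^ card S * b ^ (card F - card S)))"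
    unfolding Pow_insert_sum[OF insert(1,2)]
    by (intro arg_cong2[where f="(+)"] sum.cong refl) (simp_all add: c1 c2)
  also have "\<dots> = (a + b) * (a + b) ^ card F"
    using insert by (simp add: sum_distrib_left[symmetric] algebra_simps)
  finally show ?case using insert by simp
qed

lemma wt_sum1:
  assumes "finite X"
  shows "(\<Sum>S\<in>Pow X. wt p X S) = 1"
  using pow_sum[OF assms, of p "1-p"] unfolding wt_def by simp

lemma wt_split:
  assumes "finite X" "D \<subseteq> X" "S \<subseteq> D" "R \<subseteq> X - D"
  shows "wt p X (S \<union> R) = wt p D S * wt p (X - D) R"
proof -
  have fD: "finite D" using finite_subset[OF assms(2,1)] .
  have fS: "finite S" "finite R" using assms fD by (auto intro: finite_subset)
  have "card (S \<union> R) = card S + card R" using assms fS by (subst card_Un_disjoint) auto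
  moreover have "card X = card D + card (X - D)" using assms fD
    by (metis card_Diff_subset le_add_diff_inverse card_mono)
  moreover have "card S \<le> card D" using card_mono[OF fD assms(3)] .
  moreover have "card R \<le> card (X - D)" using card_mono[OF _ assms(4)] assms(1) by simp
  ultimately have "card X - card (S \<union> R) = (card D - card S) + (card (X - D) - card R)" by simp
  then show ?thesis unfolding wt_def using \<open>card (S \<union> R) = card S + card R\<close>
    by (simp add: power_add algebra_simps)
qed

lemma sum_split:
  fixes h :: "'a set \<Rightarrow> real"
  assumes "finite X" "D \<subseteq> X"
  shows "(\<Sum>E\<in>Pow X. wt p X E * h E) =
     (\<Sum>S\<in>Pow D. \<Sum>R\<in>Pow (X - D). wt p D S * wt p (X - D) R * h (S \<union> R))"
proof -
  have bij: "bij_betw (\<lambda>(S, R). S \<union> R) (Pow D \<times> Pow (X - D)) (Pow X)"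
  proof (rule bij_betwI[where g = "\<lambda>E. (E \<inter> D, E - D)"])
    show "(\<lambda>(S, R). S \<union> R) \<in> Pow D \<times> Pow (X - D) \<rightarrow> Pow X" using assms by auto
    show "(\<lambda>E. (E \<inter> D, E - D)) \<in> Pow X \<rightarrow> Pow D \<times> Pow (X - D)" by auto
  qed (auto)
  have "(\<Sum>E\<in>Pow X. wt p X E * h E) = (\<Sum>(S,R)\<in>Pow D \<times> Pow (X - D). wt p X (S \<union> R) * h (S \<union> R))"
    using sum.reindex_bij_betw[OF bij, of "\<lambda>E. wt p X E * h E"] by (simp add: case_prod_unfold)
  also have "\<dots> = (\<Sum>(S,R)\<in>Pow D \<times> Pow (X - D). wt p D S * wt p (X - D) R * h (S \<union> R))"
    using assms by (intro sum.cong refl) (auto simp: wt_split)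
  also have "\<dots> = (\<Sum>S\<in>Pow D. \<Sum>R\<in>Pow (X - D). wt p D S * wt p (X - D) R * h (S \<union> R))"
    by (rule sum.cartesian_product[symmetric])
  finally show ?thesis .
qed

lemma finite_all_edges: "finite (all_edges n)"
proof -
  have "all_edges n \<subseteq> (\<lambda>(u,v). {u,v}) ` ({1..n} \<times> {1..n})" unfolding all_edges_def by auto
  then show ?thesis using finite_subset by blast
qed

lemma gnp_expect:
  assumes "0 < p" "p < 1"
  shows "measure_pmf.expectation (gnp n p) h = (\<Sum>E\<in>Pow (all_edges n). wt p (all_edges n) E * h E)"
proof -
  let ?A = "all_edges n"
  let ?M = "Pi_pmf ?A False (\<lambda>_. bernoulli_pmf p)"
  let ?g = "\<lambda>b. {e \<in> ?A. b e}"
  have fA: "finite ?A" by (rule finite_all_edges)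
  have sM: "set_pmf ?M = PiE_dflt ?A False (\<lambda>_. UNIV)"
    using assms fA by (simp add: set_Pi_pmf set_pmf_bernoulli o_def)
  have inj: "inj_on ?g (set_pmf ?M)" unfolding sM inj_on_def PiE_dflt_def
    by (auto simp: fun_eq_iff)
  have pm: "pmf (gnp n p) E = wt p ?A E" if "E \<subseteq> ?A" for E
  proof -
    have mem: "(\<lambda>e. e \<in> E) \<in> set_pmf ?M" unfolding sM PiE_dflt_def using that by auto
    have "E = ?g (\<lambda>e. e \<in> E)" using that by auto
    then have "pmf (gnp n p) E = pmf ?M (\<lambda>e. e \<in> E)"
      unfolding gnp_def using pmf_map_inj[OF inj mem] by metis
    also have "\<dots> = (\<Prod>x\<in>?A. pmf (bernoulli_pmf p) (x \<in> E))"
      using fA that by (subst pmf_Pi') auto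
    also have "\<dots> = (\<Prod>x\<in>E. p) * (\<Prod>x\<in>?A - E. 1 - p)"
      using fA that assms
      by (subst prod.subset_diff[of E]) (auto intro!: arg_cong2[where f="(*)"] prod.cong)
    also have "\<dots> = wt p ?A E" unfolding wt_def using fA that
      by (simp add: card_Diff_subset finite_subset)
    finally show ?thesis .
  qed
  have "measure_pmf.expectation (gnp n p) h = (\<Sum>E\<in>Pow ?A. h E * pmf (gnp n p) E)"
    by (rule integral_measure_pmf_real) (auto simp: fA gnp_def)
  also have "\<dots> = (\<Sum>E\<in>Pow ?A. wt p ?A E * h E)" by (intro sum.cong) (auto simp: pm)
  finally show ?thesis .
qed




lemma prob_bind: "measure_pmf.prob (bind_pmf M f) A = measure_pmf.expectation M (\<lambda>x. measure_pmf.prob (f x) A)"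
  unfolding measure_pmf_bind
  by (rule measure_pmf.measure_bind[where N="count_space UNIV"]) (auto simp: measurable_def space_subprob_algebra sets_measure_pmf prob_space_imp_subprob_space measure_pmf.prob_space_axioms)

definition Dv :: "nat \<Rightarrow> (nat \<Rightarrow> nat) \<Rightarrow> nat set set" where
  "Dv m vs = (\<lambda>e. vs ` e) ` all_edges m"
definition Av :: "nat set set \<Rightarrow> (nat \<Rightarrow> nat) \<Rightarrow> nat set set" where
  "Av EH vs = (\<lambda>e. vs ` e) ` EH"

lemma part_eq:
  assumes "0 < n div m" "1 \<le> i" "1 \<le> j" "x \<in> part n m i" "x \<in> part n m j"
  shows "i = j"
proof -
  let ?s = "n div m"
  have b: "Suc ((i - 1) * ?s) \<le> x" "x \<le> i * ?s" "Suc ((j - 1) * ?s) \<le> x" "x \<le> j * ?s"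
    using assms(4,5) unfolding part_def by auto
  have a: "(i - 1) * ?s < j * ?s" "(j - 1) * ?s < i * ?s" using b by linarith+
  then have "i - 1 < j" "j - 1 < i" by (metis mult_less_cancel2)+
  then show ?thesis using assms by linarith
qed

lemma part_sub: "1 \<le> i \<Longrightarrow> i \<le> m \<Longrightarrow> part n m i \<subseteq> {1..n}"
proof -
  assume i: "1 \<le> i" "i \<le> m"
  have "i * (n div m) \<le> m * (n div m)" using i by simp
  also have "\<dots> \<le> n" by simp
  finally show ?thesis unfolding part_def by auto
qed

lemma card_part: "1 \<le> i \<Longrightarrow> card (part n m i) = n div m"
proof -
  assume "1 \<le> i"
  then have "i * (n div m) = (i - 1) * (n div m) + n div m"
    by (metis One_nat_def Suc_pred add.commute le_add_diff_inverse2 le_eq_less_or_eq less_one mult_Suc not_less0 plus_1_eq_Suc)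
  then show ?thesis unfolding part_def by simp
qed

lemma mem_Dv: "x \<in> Dv m vs \<longleftrightarrow> (\<exists>i j. i \<in> {1..m} \<and> j \<in> {1..m} \<and> i \<noteq> j \<and> x = {vs i, vs j})"
proof
  assume "x \<in> Dv m vs"
  then obtain e where e: "e \<in> all_edges m" "x = vs ` e" unfolding Dv_def by blast
  then obtain u v where "u \<in> {1..m}" "v \<in> {1..m}" "u \<noteq> v" "e = {u, v}" unfolding all_edges_def by blast
  then show "\<exists>i j. i \<in> {1..m} \<and> j \<in> {1..m} \<and> i \<noteq> j \<and> x = {vs i, vs j}" using e(2) by auto
next
  assume "\<exists>i j. i \<in> {1..m} \<and> j \<in> {1..m} \<and> i \<noteq> j \<and> x = {vs i, vs j}"
  then obtain i j where ij: "i \<in> {1..m}" "j \<in> {1..m}" "i \<noteq> j" "x = {vs i, vs j}" by blast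
  then have "{i, j} \<in> all_edges m" unfolding all_edges_def by blast
  moreover have "x = vs ` {i, j}" using ij by simp
  ultimately show "x \<in> Dv m vs" unfolding Dv_def by blast
qed

context
  fixes n m :: nat
  assumes s_pos: "0 < n div m"
begin

lemma ob_eq:
  assumes "vs \<in> obeying n m" "ws \<in> obeying n m" "i \<in> {1..m}" "j \<in> {1..m}" "vs i = ws j"
  shows "i = j"
proof -
  have "vs i \<in> part n m i" using assms(1,3) unfolding obeying_def by (rule PiE_mem)
  have wj: "ws j \<in> part n m j" using assms(2,4) unfolding obeying_def by (rule PiE_mem)
  have wi: "ws j \<in> part n m i" using \<open>vs i \<in> part n m i\<close> assms(5) by simp
  have "1 \<le> i" "1 \<le> j" using assms(3,4) by simp_all
  then show ?thesis using part_eq[OF s_pos _ _ wi wj] by blast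
qed

lemma ob_inj:
  assumes vs: "vs \<in> obeying n m" shows "inj_on vs {1..m}"
proof (rule inj_onI)
  fix i j assume "i \<in> {1..m}" "j \<in> {1..m}" "vs i = vs j"
  then show "i = j" by (rule ob_eq[OF vs vs])
qed

lemma ob_range:
  assumes a: "vs \<in> obeying n m" "i \<in> {1..m}" shows "vs i \<in> {1..n}"
proof -
  have "vs i \<in> part n m i" using a unfolding obeying_def by (rule PiE_mem)
  moreover have "part n m i \<subseteq> {1..n}" using part_sub[of i m n] a(2) by simp
  ultimately show ?thesis by blast
qed

lemma Dv_sub:
  assumes vs: "vs \<in> obeying n m" shows "Dv m vs \<subseteq> all_edges n"
proof
  fix x assume "x \<in> Dv m vs"
  then obtain u v where uv: "u \<in> {1..m}" "v \<in> {1..m}" "u \<noteq> v" "x = {vs u, vs v}"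
    unfolding mem_Dv by blast
  then have "vs u \<noteq> vs v" using ob_inj[OF vs] unfolding inj_on_def by blast
  moreover have "vs u \<in> {1..n}" "vs v \<in> {1..n}" using ob_range[OF vs] uv(1,2) by blast+
  ultimately show "x \<in> all_edges n" unfolding all_edges_def using uv(4) by blast
qed

lemma Av_sub: "EH \<subseteq> all_edges m \<Longrightarrow> Av EH vs \<subseteq> Dv m vs"
  unfolding Dv_def Av_def by (rule image_mono)

lemma inj_img:
  assumes vs: "vs \<in> obeying n m" shows "inj_on (\<lambda>e. vs ` e) (all_edges m)"
proof (rule inj_onI)
  fix x y assume "x \<in> all_edges m" "y \<in> all_edges m" and eq: "vs ` x = vs ` y"
  then have "x \<subseteq> {1..m}" "y \<subseteq> {1..m}" unfolding all_edges_def by auto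
  then show "x = y" using inj_on_image_eq_iff[OF ob_inj[OF vs]] eq by blast
qed

lemma card_Dv: "vs \<in> obeying n m \<Longrightarrow> card (Dv m vs) = card (all_edges m)"
  unfolding Dv_def by (rule card_image[OF inj_img])

lemma card_Av: "vs \<in> obeying n m \<Longrightarrow> EH \<subseteq> all_edges m \<Longrightarrow> card (Av EH vs) = card EH"
  unfolding Av_def by (rule card_image[OF inj_on_subset[OF inj_img]])

lemma copies_iff:
  assumes vs: "vs \<in> obeying n m" and EH: "EH \<subseteq> all_edges m"
  shows "vs \<in> induced_copies n m EH E \<longleftrightarrow> E \<inter> Dv m vs = Av EH vs"
proof -
  have inj: "inj_on vs {1..m}" by (rule ob_inj[OF vs])
  have key: "{vs i, vs j} \<in> Av EH vs \<longleftrightarrow> {i, j} \<in> EH" if "i \<in> {1..m}" "j \<in> {1..m}" for i j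
  proof
    assume "{vs i, vs j} \<in> Av EH vs"
    then obtain e where e: "e \<in> EH" "{vs i, vs j} = vs ` e" unfolding Av_def by auto
    then have "e \<subseteq> {1..m}" using EH unfolding all_edges_def by auto
    then have "vs ` {i,j} = vs ` e" using e by simp
    moreover have "{i,j} \<subseteq> {1..m}" using that by auto
    ultimately have "{i,j} = e" using inj_on_image_eq_iff[OF inj _ \<open>e \<subseteq> {1..m}\<close>] by blast
    then show "{i, j} \<in> EH" using e by simp
  next
    assume "{i, j} \<in> EH"
    moreover have "{vs i, vs j} = vs ` {i, j}" by simp
    ultimately show "{vs i, vs j} \<in> Av EH vs" unfolding Av_def by blast
  qed
  show ?thesis
  proof
    assume c: "vs \<in> induced_copies n m EH E"
    show "E \<inter> Dv m vs = Av EH vs"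
    proof
      show "E \<inter> Dv m vs \<subseteq> Av EH vs"
      proof
        fix x assume "x \<in> E \<inter> Dv m vs"
        then have "x \<in> Dv m vs" "x \<in> E" by auto
        then obtain i j where ij: "i \<in> {1..m}" "j \<in> {1..m}" "i \<noteq> j" "x = {vs i, vs j}" "x \<in> E"
          unfolding mem_Dv by blast
        then show "x \<in> Av EH vs" using c key unfolding induced_copies_def by auto
      qed
      show "Av EH vs \<subseteq> E \<inter> Dv m vs"
      proof
        fix x assume x: "x \<in> Av EH vs"
        then have "x \<in> Dv m vs" using Av_sub[OF EH] by auto
        from x obtain e where e: "e \<in> EH" "x = vs ` e" unfolding Av_def by blast
        then have "e \<in> all_edges m" using EH by blast
        then obtain i j where "e = {i, j}" unfolding all_edges_def by blast
        then have ij: "{i,j} \<in> EH" "x = {vs i, vs j}" using e by auto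
        then have "{i,j} \<in> all_edges m" using EH by blast
        then obtain u v where "u \<in> {1..m}" "v \<in> {1..m}" "u \<noteq> v" "{i,j} = {u, v}" unfolding all_edges_def by blast
        then have "i \<in> {1..m}" "j \<in> {1..m}" "i \<noteq> j" by (auto simp: doubleton_eq_iff)
        then show "x \<in> E \<inter> Dv m vs" using c ij \<open>x \<in> Dv m vs\<close> unfolding induced_copies_def by auto
      qed
    qed
  next
    assume h: "E \<inter> Dv m vs = Av EH vs"
    show "vs \<in> induced_copies n m EH E" unfolding induced_copies_def
    proof (intro CollectI conjI ballI impI vs)
      fix i j assume ij: "i \<in> {1..m}" "j \<in> {1..m}" "i \<noteq> j"
      then have "{vs i, vs j} \<in> Dv m vs" unfolding mem_Dv by blast
      then show "({i, j} \<in> EH) = ({vs i, vs j} \<in> E)" using h key[OF ij(1,2)] by blast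
    qed
  qed
qed

lemma plant_eq:
  assumes vs: "vs \<in> obeying n m" and EH: "EH \<subseteq> all_edges m" and E: "E \<subseteq> all_edges n"
  shows "plant m EH vs E = (E - Dv m vs) \<union> Av EH vs"
proof -
  have "{e \<in> E. \<not> e \<subseteq> vs ` {1..m}} = E - Dv m vs"
  proof (intro equalityI subsetI)
    fix x assume "x \<in> {e \<in> E. \<not> e \<subseteq> vs ` {1..m}}"
    then have x: "x \<in> E" "\<not> x \<subseteq> vs ` {1..m}" by auto
    have "x \<notin> Dv m vs"
    proof
      assume "x \<in> Dv m vs"
      then obtain i j where "i \<in> {1..m}" "j \<in> {1..m}" "x = {vs i, vs j}" unfolding mem_Dv by blast
      then have "x \<subseteq> vs ` {1..m}" by auto
      then show False using x by blast
    qed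
    then show "x \<in> E - Dv m vs" using x by blast
  next
    fix x assume x: "x \<in> E - Dv m vs"
    then obtain u v where uv: "u \<noteq> v" "x = {u, v}" using E unfolding all_edges_def by auto
    have "\<not> x \<subseteq> vs ` {1..m}"
    proof
      assume "x \<subseteq> vs ` {1..m}"
      then obtain i j where "i \<in> {1..m}" "j \<in> {1..m}" "u = vs i" "v = vs j" using uv by auto
      then have "{i, j} \<in> all_edges m" "x = vs ` {i, j}" using uv unfolding all_edges_def by auto
      then have "x \<in> Dv m vs" unfolding Dv_def by blast
      then show False using x by auto
    qed
    then show "x \<in> {e \<in> E. \<not> e \<subseteq> vs ` {1..m}}" using x by auto
  qed
  moreover have "{{vs i, vs j} | i j. {i, j} \<in> EH} = Av EH vs"
  proof (intro equalityI subsetI)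
    fix x assume "x \<in> {{vs i, vs j} | i j. {i, j} \<in> EH}"
    then obtain i j where "{i, j} \<in> EH" "x = {vs i, vs j}" by blast
    moreover have "{vs i, vs j} = vs ` {i, j}" by simp
    ultimately show "x \<in> Av EH vs" unfolding Av_def by blast
  next
    fix x assume "x \<in> Av EH vs"
    then obtain e where "e \<in> EH" "x = vs ` e" unfolding Av_def by auto
    moreover then obtain i j where "e = {i, j}" using EH unfolding all_edges_def by auto
    ultimately show "x \<in> {{vs i, vs j} | i j. {i, j} \<in> EH}" by auto
  qed
  ultimately show ?thesis unfolding plant_def by simp
qed

end



lemma assembly:
  fixes W X Psi :: "'a \<Rightarrow> real"
  assumes fin: "finite I" and W0: "\<And>i. i \<in> I \<Longrightarrow> 0 \<le> W i" and W1: "(\<Sum>i\<in>I. W i) = 1"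
    and mean: "(\<Sum>i\<in>I. W i * X i) = \<mu>" and sec: "(\<Sum>i\<in>I. W i * X i ^ 2) \<le> (1 + 4 * \<epsilon>) * \<mu>^2"
    and mu: "0 < \<mu>" and Psi: "\<And>i. i \<in> I \<Longrightarrow> 0 \<le> Psi i \<and> Psi i \<le> 1"
    and X0: "\<And>i. i \<in> I \<Longrightarrow> 0 \<le> X i"
    and beta: "0 \<le> \<beta>" "\<beta> < 1"
  shows "(\<Sum>i\<in>I. W i * (X i * Psi i)) / \<mu> \<ge> \<beta> * ((\<Sum>i\<in>I. W i * Psi i) - 4 * \<epsilon> / (1 - \<beta>)^2)"
proof -
  define c where "c = ((1 - \<beta>) * \<mu>)^2"
  have c: "0 < c" unfolding c_def using mu beta by simp
  have pw: "X i * Psi i / \<mu> \<ge> \<beta> * (Psi i - (X i - \<mu>)^2 / c)" if i: "i \<in> I" for i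
  proof (cases "X i < \<beta> * \<mu>")
    case True
    then have "(1 - \<beta>) * \<mu> \<le> \<mu> - X i" by (simp add: algebra_simps)
    moreover have "0 \<le> (1 - \<beta>) * \<mu>" using mu beta by simp
    ultimately have "c \<le> (X i - \<mu>)^2" unfolding c_def
      by (metis abs_of_nonneg abs_le_square_iff order_trans abs_minus_commute abs_ge_self)
    then have "1 \<le> (X i - \<mu>)^2 / c" using c by simp
    then have "Psi i - (X i - \<mu>)^2 / c \<le> 0" using Psi[OF i] by linarith
    then have "\<beta> * (Psi i - (X i - \<mu>)^2 / c) \<le> 0" using beta mult_nonneg_nonpos by blast
    moreover have "0 \<le> X i * Psi i / \<mu>" using X0[OF i] Psi[OF i] mu by simp
    ultimately show ?thesis by linarith
  next
    case False
    have "\<beta> * (Psi i - (X i - \<mu>)^2 / c) \<le> \<beta> * Psi i"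
      using beta c by (simp add: mult_left_mono)
    also have "\<dots> \<le> X i / \<mu> * Psi i" using False Psi[OF i] mu
      by (intro mult_right_mono) (simp_all add: field_simps)
    finally show ?thesis by simp
  qed
  have var: "(\<Sum>i\<in>I. W i * (X i - \<mu>)^2) \<le> 4 * \<epsilon> * \<mu>^2"
  proof -
    have "(\<Sum>i\<in>I. W i * (X i - \<mu>)^2) = (\<Sum>i\<in>I. W i * X i ^ 2) - 2 * \<mu> * (\<Sum>i\<in>I. W i * X i) + \<mu>^2 * (\<Sum>i\<in>I. W i)"
      by (simp add: power2_diff algebra_simps sum.distrib sum_subtractf sum_distrib_left) (simp add: sum_distrib_right)
    then show ?thesis using sec mean W1 by (simp add: algebra_simps power2_eq_square)
  qed
  have "(\<Sum>i\<in>I. W i * (X i * Psi i)) / \<mu> = (\<Sum>i\<in>I. W i * (X i * Psi i / \<mu>))"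
    by (simp add: sum_divide_distrib)
  also have "\<dots> \<ge> (\<Sum>i\<in>I. W i * (\<beta> * (Psi i - (X i - \<mu>)^2 / c)))"
    by (intro sum_mono mult_left_mono pw W0)
  finally have "(\<Sum>i\<in>I. W i * (X i * Psi i)) / \<mu> \<ge> \<beta> * ((\<Sum>i\<in>I. W i * Psi i) - (\<Sum>i\<in>I. W i * (X i - \<mu>)^2) / c)"
    by (simp add: algebra_simps sum_distrib_left sum_subtractf sum_divide_distrib)
  moreover have "(\<Sum>i\<in>I. W i * (X i - \<mu>)^2) / c \<le> 4 * \<epsilon> / (1 - \<beta>)^2"
  proof -
    have "(\<Sum>i\<in>I. W i * (X i - \<mu>)^2) / c \<le> 4 * \<epsilon> * \<mu>^2 / c"
      using var c by (simp add: divide_right_mono)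
    also have "\<dots> = 4 * \<epsilon> / (1 - \<beta>)^2" unfolding c_def using mu by (simp add: power_mult_distrib)
    finally show ?thesis .
  qed
  ultimately show ?thesis using beta by (smt (verit) mult_left_mono)
qed

lemma wt_nonneg: "0 \<le> p \<Longrightarrow> p \<le> 1 \<Longrightarrow> 0 \<le> wt p X E"
  unfolding wt_def by simp

definition qH :: "real \<Rightarrow> nat \<Rightarrow> nat set set \<Rightarrow> real" where
  "qH p m EH = p ^ card EH * (1 - p) ^ (card (all_edges m) - card EH)"

context
  fixes n m :: nat and EH :: "nat set set" and p :: real
  assumes s_pos: "0 < n div m" and EH: "EH \<subseteq> all_edges m" and p0: "0 < p" and p1: "p < 1"
begin

lemma qH_eq: "vs \<in> obeying n m \<Longrightarrow> wt p (Dv m vs) (Av EH vs) = qH p m EH"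
  unfolding wt_def qH_def using card_Dv[OF s_pos] card_Av[OF s_pos _ EH] by simp

lemma plant_sum:
  assumes vs: "vs \<in> obeying n m"
  shows "(\<Sum>E\<in>Pow (all_edges n). wt p (all_edges n) E * h (plant m EH vs E)) * qH p m EH
       = (\<Sum>E\<in>Pow (all_edges n). wt p (all_edges n) E * (if vs \<in> induced_copies n m EH E then h E else 0))"
proof -
  let ?X = "all_edges n" let ?D = "Dv m vs" let ?A = "Av EH vs" let ?R = "?X - ?D"
  have fX: "finite ?X" by (rule finite_all_edges)
  have DX: "?D \<subseteq> ?X" by (rule Dv_sub[OF s_pos vs])
  have AD: "?A \<subseteq> ?D" by (rule Av_sub[OF s_pos EH])
  have fD: "finite ?D" using finite_subset[OF DX fX] .
  have fR: "finite ?R" using fX by simp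
  define K where "K = (\<Sum>R\<in>Pow ?R. wt p ?R R * h (R \<union> ?A))"
  have pl: "plant m EH vs (S \<union> R) = R \<union> ?A" if "S \<subseteq> ?D" "R \<subseteq> ?R" for S R
  proof -
    have "S \<union> R \<subseteq> ?X" using that DX by auto
    then have "plant m EH vs (S \<union> R) = ((S \<union> R) - ?D) \<union> ?A" by (rule plant_eq[OF s_pos vs EH])
    also have "(S \<union> R) - ?D = R" using that by auto
    finally show ?thesis .
  qed
  have "(\<Sum>E\<in>Pow ?X. wt p ?X E * h (plant m EH vs E))
      = (\<Sum>S\<in>Pow ?D. \<Sum>R\<in>Pow ?R. wt p ?D S * wt p ?R R * h (plant m EH vs (S \<union> R)))"
    by (rule sum_split[OF fX DX])
  also have "\<dots> = (\<Sum>S\<in>Pow ?D. wt p ?D S * K)"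
    unfolding K_def sum_distrib_left
    by (intro sum.cong refl) (simp add: pl mult.assoc)
  also have "\<dots> = K" using wt_sum1[OF fD] by (simp add: sum_distrib_right[symmetric])
  finally have L: "(\<Sum>E\<in>Pow ?X. wt p ?X E * h (plant m EH vs E)) = K" .
  have cp: "vs \<in> induced_copies n m EH (S \<union> R) \<longleftrightarrow> S = ?A" if "S \<subseteq> ?D" "R \<subseteq> ?R" for S R
  proof -
    have "(S \<union> R) \<inter> ?D = S" using that by auto
    then show ?thesis using copies_iff[OF s_pos vs EH] by simp
  qed
  have "(\<Sum>E\<in>Pow ?X. wt p ?X E * (if vs \<in> induced_copies n m EH E then h E else 0))
      = (\<Sum>S\<in>Pow ?D. \<Sum>R\<in>Pow ?R. wt p ?D S * wt p ?R R * (if vs \<in> induced_copies n m EH (S \<union> R) then h (S \<union> R) else 0))"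
    by (rule sum_split[OF fX DX])
  also have "\<dots> = (\<Sum>S\<in>Pow ?D. if S = ?A then wt p ?D S * K else 0)"
    unfolding K_def sum_distrib_left
    by (intro sum.cong refl) (auto simp: cp Un_commute mult.assoc)
  also have "\<dots> = wt p ?D ?A * K" using AD fD by (simp add: sum.delta')
  finally show ?thesis using L qH_eq[OF vs] by simp
qed

end



definition agree :: "nat \<Rightarrow> (nat \<Rightarrow> nat) \<Rightarrow> (nat \<Rightarrow> nat) \<Rightarrow> nat set" where
  "agree m vs ws = {i \<in> {1..m}. vs i = ws i}"

context
  fixes n m :: nat and EH :: "nat set set" and p :: real
  assumes s_pos: "0 < n div m" and EH: "EH \<subseteq> all_edges m" and p0: "0 < p" and p1: "p < 1"
begin

lemma both_bound:
  assumes vs: "vs \<in> obeying n m" and ws: "ws \<in> obeying n m"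
  shows "(\<Sum>E\<in>Pow (all_edges n). wt p (all_edges n) E * (if vs \<in> induced_copies n m EH E \<and> ws \<in> induced_copies n m EH E then 1 else 0))
     * (p ^ card (Av EH vs \<inter> Av EH ws) * (1 - p) ^ card (Dv m vs \<inter> Dv m ws)) \<le> (qH p m EH)^2"
proof -
  let ?X = "all_edges n" let ?D = "Dv m vs" let ?D' = "Dv m ws" let ?A = "Av EH vs" let ?A' = "Av EH ws"
  let ?U = "?D \<union> ?D'" let ?B = "?A \<union> ?A'" let ?R = "?X - ?U"
  have fX: "finite ?X" by (rule finite_all_edges)
  have DX: "?D \<subseteq> ?X" "?D' \<subseteq> ?X" by (rule Dv_sub[OF s_pos vs], rule Dv_sub[OF s_pos ws])
  have AD: "?A \<subseteq> ?D" "?A' \<subseteq> ?D'" by (rule Av_sub[OF s_pos EH])+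
  have UX: "?U \<subseteq> ?X" using DX by auto
  have BU: "?B \<subseteq> ?U" using AD by auto
  have fD: "finite ?D" "finite ?D'" using finite_subset[OF DX(1) fX] finite_subset[OF DX(2) fX] .
  have fA: "finite ?A" "finite ?A'" using finite_subset[OF AD(1) fD(1)] finite_subset[OF AD(2) fD(2)] .
  have fU: "finite ?U" using fD by simp
  have fR: "finite ?R" using fX by simp
  have wnn: "\<And>Y Z. 0 \<le> wt p Y Z" using p0 p1 by (intro wt_nonneg) auto
  have ind: "(if vs \<in> induced_copies n m EH (S \<union> R) \<and> ws \<in> induced_copies n m EH (S \<union> R) then 1 else 0)
      \<le> (if S = ?B then 1 else (0::real))" if "S \<subseteq> ?U" "R \<subseteq> ?R" for S R
  proof (cases "vs \<in> induced_copies n m EH (S \<union> R) \<and> ws \<in> induced_copies n m EH (S \<union> R)")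
    case True
    then have "(S \<union> R) \<inter> ?D = ?A" "(S \<union> R) \<inter> ?D' = ?A'"
      using copies_iff[OF s_pos vs EH] copies_iff[OF s_pos ws EH] by auto
    moreover have "S = ((S \<union> R) \<inter> ?D) \<union> ((S \<union> R) \<inter> ?D')" using that by auto
    ultimately have "S = ?B" by simp
    then show ?thesis by simp
  next
    case False
    show ?thesis by (subst if_not_P[OF False]) simp
  qed
  have "(\<Sum>E\<in>Pow ?X. wt p ?X E * (if vs \<in> induced_copies n m EH E \<and> ws \<in> induced_copies n m EH E then 1 else 0))
    = (\<Sum>S\<in>Pow ?U. \<Sum>R\<in>Pow ?R. wt p ?U S * wt p ?R R * (if vs \<in> induced_copies n m EH (S \<union> R) \<and> ws \<in> induced_copies n m EH (S \<union> R) then 1 else 0))"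
    by (rule sum_split[OF fX UX])
  also have "\<dots> \<le> (\<Sum>S\<in>Pow ?U. \<Sum>R\<in>Pow ?R. wt p ?U S * wt p ?R R * (if S = ?B then 1 else 0))"
    by (intro sum_mono mult_left_mono ind mult_nonneg_nonneg wnn) auto
  also have "\<dots> = (\<Sum>S\<in>Pow ?U. if S = ?B then wt p ?U S * (\<Sum>R\<in>Pow ?R. wt p ?R R) else 0)"
    by (intro sum.cong refl) (auto simp: sum_distrib_left)
  also have "\<dots> = wt p ?U ?B" using BU fU wt_sum1[OF fR] by (simp add: sum.delta')
  finally have S1: "(\<Sum>E\<in>Pow ?X. wt p ?X E * (if vs \<in> induced_copies n m EH E \<and> ws \<in> induced_copies n m EH E then 1 else 0)) \<le> wt p ?U ?B" .
  define e where "e = card EH"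
  define c where "c = card (all_edges m)"
  have cA: "card ?A = e" "card ?A' = e" unfolding e_def by (rule card_Av[OF s_pos vs EH], rule card_Av[OF s_pos ws EH])
  have cD: "card ?D = c" "card ?D' = c" unfolding c_def by (rule card_Dv[OF s_pos vs], rule card_Dv[OF s_pos ws])
  have ec: "e \<le> c" using card_mono[OF fD(1) AD(1)] cA cD by simp
  have cB: "card ?B + card (?A \<inter> ?A') = 2 * e" using card_Un_Int[OF fA] cA by simp
  have cU: "card ?U + card (?D \<inter> ?D') = 2 * c" using card_Un_Int[OF fD] cD by simp
  have BleU: "card ?B \<le> card ?U" using card_mono[OF fU BU] .
  have ex1: "(card ?U - card ?B) + card (?D \<inter> ?D') = 2 * c - card ?B" using cU BleU by linarith
  have ex2: "2 * (c - e) \<le> 2 * c - card ?B" using cB ec by linarith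
  have "wt p ?U ?B * (p ^ card (?A \<inter> ?A') * (1 - p) ^ card (?D \<inter> ?D'))
     = p ^ (card ?B + card (?A \<inter> ?A')) * (1 - p) ^ ((card ?U - card ?B) + card (?D \<inter> ?D'))"
    unfolding wt_def by (simp add: power_add)
  also have "\<dots> = p ^ (2 * e) * (1 - p) ^ (2 * c - card ?B)" using cB ex1 by simp
  also have "\<dots> \<le> p ^ (2 * e) * (1 - p) ^ (2 * (c - e))"
    using p0 p1 ex2 by (intro mult_left_mono power_decreasing) auto
  also have "\<dots> = (qH p m EH)^2" unfolding qH_def e_def c_def
    by (simp add: power_mult_distrib power_mult[symmetric] mult.commute)
  finally have S2: "wt p ?U ?B * (p ^ card (?A \<inter> ?A') * (1 - p) ^ card (?D \<inter> ?D')) \<le> (qH p m EH)^2" .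
  have "0 \<le> p ^ card (?A \<inter> ?A') * (1 - p) ^ card (?D \<inter> ?D')" using p0 p1 by simp
  then show ?thesis using S1 S2 mult_right_mono order_trans by blast
qed

lemma Aint_bound:
  assumes vs: "vs \<in> obeying n m" and ws: "ws \<in> obeying n m"
  shows "card (Av EH vs \<inter> Av EH ws) \<le> card {e \<in> EH. e \<subseteq> agree m vs ws}"
proof -
  have "Av EH vs \<inter> Av EH ws \<subseteq> (\<lambda>e. vs ` e) ` {e \<in> EH. e \<subseteq> agree m vs ws}"
  proof
    fix x assume "x \<in> Av EH vs \<inter> Av EH ws"
    then obtain e e' where e: "e \<in> EH" "x = vs ` e" "e' \<in> EH" "x = ws ` e'" unfolding Av_def by blast
    have em: "e \<subseteq> {1..m}" "e' \<subseteq> {1..m}" using e EH unfolding all_edges_def by blast+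
    have "e \<subseteq> agree m vs ws"
    proof
      fix u assume u: "u \<in> e"
      then have "vs u \<in> ws ` e'" using e by blast
      then obtain k where k: "k \<in> e'" "vs u = ws k" by blast
      then have "u = k" using ob_eq[OF s_pos vs ws] em u by blast
      then show "u \<in> agree m vs ws" unfolding agree_def using k em u by auto
    qed
    then show "x \<in> (\<lambda>e. vs ` e) ` {e \<in> EH. e \<subseteq> agree m vs ws}" using e by blast
  qed
  moreover have "finite EH" using EH finite_all_edges finite_subset by blast
  ultimately show ?thesis using card_mono card_image_le order_trans by (metis (no_types, lifting) finite_imageI mem_Collect_eq finite_subset subsetI)
qed

lemma Dint_bound:
  assumes vs: "vs \<in> obeying n m" and ws: "ws \<in> obeying n m"
  shows "card (Dv m vs \<inter> Dv m ws) \<le> (card (agree m vs ws))^2"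
proof -
  let ?T = "agree m vs ws"
  have fT: "finite ?T" unfolding agree_def by simp
  have in_T: "i \<in> ?T" if i: "i \<in> {1..m}" and j: "j \<in> {1..m}" "j' \<in> {1..m}" and h: "vs i = ws j \<or> vs i = ws j'" for i j j'
  proof -
    from h obtain k where k: "k \<in> {1..m}" "vs i = ws k" using j by blast
    then have "i = k" using ob_eq[OF s_pos vs ws i] by blast
    then show ?thesis unfolding agree_def using k i by auto
  qed
  have "Dv m vs \<inter> Dv m ws \<subseteq> (\<lambda>(i, j). {vs i, vs j}) ` (?T \<times> ?T)"
  proof
    fix x assume "x \<in> Dv m vs \<inter> Dv m ws"
    then have "x \<in> Dv m vs" "x \<in> Dv m ws" by auto
    then have "\<exists>i j. i \<in> {1..m} \<and> j \<in> {1..m} \<and> i \<noteq> j \<and> x = {vs i, vs j}"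
      "\<exists>i j. i \<in> {1..m} \<and> j \<in> {1..m} \<and> i \<noteq> j \<and> x = {ws i, ws j}" unfolding mem_Dv by blast+
    then obtain i j i' j' where ij: "i \<in> {1..m}" "j \<in> {1..m}" "x = {vs i, vs j}"
      and ij': "i' \<in> {1..m}" "j' \<in> {1..m}" "x = {ws i', ws j'}" by blast
    have "vs i = ws i' \<or> vs i = ws j'" "vs j = ws i' \<or> vs j = ws j'" using ij(3) ij'(3) by (auto simp: doubleton_eq_iff)
    then have "i \<in> ?T" "j \<in> ?T" using in_T ij ij' by blast+
    then show "x \<in> (\<lambda>(i, j). {vs i, vs j}) ` (?T \<times> ?T)" using ij(3) by force
  qed
  then have "card (Dv m vs \<inter> Dv m ws) \<le> card ((\<lambda>(i, j). {vs i, vs j}) ` (?T \<times> ?T))"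
    using fT by (intro card_mono) auto
  also have "\<dots> \<le> card (?T \<times> ?T)" by (rule card_image_le) (use fT in auto)
  also have "\<dots> = (card ?T)^2" by (simp add: card_cartesian_product power2_eq_square)
  finally show ?thesis .
qed

end



lemma card_obeying: "card (obeying n m) = (n div m) ^ m"
  unfolding obeying_def by (simp add: card_PiE card_part)

lemma finite_obeying: "finite (obeying n m)"
  unfolding obeying_def part_def by (intro finite_PiE) auto

lemma copies_sub: "induced_copies n m EH E \<subseteq> obeying n m"
  unfolding induced_copies_def by auto

definition Gf :: "real \<Rightarrow> real \<Rightarrow> nat \<Rightarrow> real" where
  "Gf p \<alpha> t = 1 / ((p powr (\<alpha> / 2)) ^ t * (1 - p) ^ (t^2))"

context
  fixes n m :: nat and EH :: "nat set set" and p \<alpha> :: real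
  assumes s_pos: "0 < n div m" and EH: "EH \<subseteq> all_edges m" and p0: "0 < p" and p1: "p < 1"
    and bal: "\<And>T. T \<subseteq> {1..m} \<Longrightarrow> T \<noteq> {} \<Longrightarrow> avg_deg EH T \<le> \<alpha>" and a0: "0 \<le> \<alpha>"
begin

lemma edges_in_bound:
  assumes "T \<subseteq> {1..m}"
  shows "real (card {e \<in> EH. e \<subseteq> T}) \<le> \<alpha> * card T / 2"
proof (cases "T = {}")
  case True
  have "{e \<in> EH. e \<subseteq> T} = {}" using True EH unfolding all_edges_def by auto
  then show ?thesis using True by simp
next
  case False
  have "finite T" using assms finite_subset by blast
  then have "0 < card T" using False by (simp add: card_gt_0_iff)
  then show ?thesis using bal[OF assms False] unfolding avg_deg_def by (simp add: field_simps)
qed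

lemma pair_G:
  assumes vs: "vs \<in> obeying n m" and ws: "ws \<in> obeying n m"
  shows "(\<Sum>E\<in>Pow (all_edges n). wt p (all_edges n) E * (if vs \<in> induced_copies n m EH E \<and> ws \<in> induced_copies n m EH E then 1 else 0))
     \<le> (qH p m EH)^2 * Gf p \<alpha> (card (agree m vs ws))"
proof -
  let ?S = "(\<Sum>E\<in>Pow (all_edges n). wt p (all_edges n) E * (if vs \<in> induced_copies n m EH E \<and> ws \<in> induced_copies n m EH E then 1 else 0))"
  let ?k = "card (Av EH vs \<inter> Av EH ws)" let ?k2 = "card (Dv m vs \<inter> Dv m ws)"
  let ?T = "agree m vs ws" let ?t = "card (agree m vs ws)"
  have TS: "?T \<subseteq> {1..m}" unfolding agree_def by auto
  have k: "real ?k \<le> \<alpha> * ?t / 2"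
    using Aint_bound[OF s_pos EH p0 p1 vs ws] edges_in_bound[OF TS] by linarith
  have k2: "?k2 \<le> ?t^2" by (rule Dint_bound[OF s_pos EH p0 p1 vs ws])
  have "p powr (\<alpha> * ?t / 2) \<le> p powr (real ?k)"
    using k p0 p1 by (intro powr_mono') auto
  also have "\<dots> = p ^ ?k" using p0 by (simp add: powr_realpow)
  finally have P1: "(p powr (\<alpha> / 2)) ^ ?t \<le> p ^ ?k"
    using p0 by (simp add: powr_realpow[symmetric] powr_powr mult.commute)
  have P2: "(1 - p) ^ (?t^2) \<le> (1 - p) ^ ?k2" using k2 p0 p1 by (intro power_decreasing) auto
  have pos: "0 < (p powr (\<alpha> / 2)) ^ ?t * (1 - p) ^ (?t^2)" using p0 p1 by simp
  have "(p powr (\<alpha> / 2)) ^ ?t * (1 - p) ^ (?t^2) \<le> p ^ ?k * (1 - p) ^ ?k2"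
    using P1 P2 p0 p1 by (intro mult_mono) auto
  then have "?S * ((p powr (\<alpha> / 2)) ^ ?t * (1 - p) ^ (?t^2)) \<le> ?S * (p ^ ?k * (1 - p) ^ ?k2)"
    by (intro mult_left_mono sum_nonneg) (auto intro!: mult_nonneg_nonneg wt_nonneg simp: less_imp_le p0 p1)
  also have "\<dots> \<le> (qH p m EH)^2" by (rule both_bound[OF s_pos EH p0 p1 vs ws])
  finally show ?thesis unfolding Gf_def using pos by (simp add: field_simps)
qed

end

lemma count_agree:
  assumes "0 < n div m" "vs \<in> obeying n m" "T0 \<subseteq> {1..m}"
  shows "card {ws \<in> obeying n m. agree m vs ws = T0} \<le> (n div m) ^ (m - card T0)"
proof -
  let ?B = "\<lambda>i. if i \<in> T0 then {vs i} else part n m i"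
  let ?P = "PiE {1..m} ?B"
  have sub: "{ws \<in> obeying n m. agree m vs ws = T0} \<subseteq> ?P"
  proof
    fix ws assume "ws \<in> {ws \<in> obeying n m. agree m vs ws = T0}"
    then have ws: "ws \<in> obeying n m" "agree m vs ws = T0" by auto
    have ext: "ws \<in> extensional {1..m}" using ws(1) unfolding obeying_def by (simp add: PiE_iff)
    have "ws i \<in> ?B i" if i: "i \<in> {1..m}" for i
    proof (cases "i \<in> T0")
      case True
      then have "vs i = ws i" using ws(2) unfolding agree_def by blast
      then show ?thesis using True by simp
    next
      case False
      have "ws i \<in> part n m i" using ws(1) i unfolding obeying_def by (rule PiE_mem)
      then show ?thesis using False by simp
    qed
    then show "ws \<in> ?P" using ext by (simp add: PiE_iff)
  qed
  have fB: "finite (?B i)" for i by (simp add: part_def)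
  have "card {ws \<in> obeying n m. agree m vs ws = T0} \<le> card ?P"
    by (rule card_mono[OF _ sub]) (simp add: finite_PiE fB)
  also have "card ?P = (\<Prod>i\<in>{1..m}. card (?B i))" by (rule card_PiE) simp
  also have "\<dots> = (\<Prod>i\<in>{1..m}. if i \<in> T0 then 1 else n div m)"
    by (rule prod.cong) (auto simp: card_part)
  also have "\<dots> = (\<Prod>i\<in>{1..m} - T0. n div m)"
    by (rule prod.mono_neutral_cong_right) auto
  also have "\<dots> = (n div m) ^ card ({1..m} - T0)" by simp
  also have "card ({1..m} - T0) = m - card T0"
    using assms(3) by (simp add: card_Diff_subset finite_subset)
  finally show ?thesis .
qed

lemma sum_agree:
  fixes h :: "nat set \<Rightarrow> real"
  assumes s: "0 < n div m" and vs: "vs \<in> obeying n m" and h0: "\<And>T. T \<subseteq> {1..m} \<Longrightarrow> 0 \<le> h T"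
  shows "(\<Sum>ws\<in>obeying n m. h (agree m vs ws)) \<le> (\<Sum>T\<in>Pow {1..m}. real ((n div m) ^ (m - card T)) * h T)"
proof -
  have img: "agree m vs ` obeying n m \<subseteq> Pow {1..m}" unfolding agree_def by blast
  have "(\<Sum>ws\<in>obeying n m. h (agree m vs ws)) = (\<Sum>T\<in>Pow {1..m}. \<Sum>ws\<in>{ws \<in> obeying n m. agree m vs ws = T}. h (agree m vs ws))"
    using sum.group[OF finite_obeying _ img, of "\<lambda>ws. h (agree m vs ws)"] by simp
  also have "\<dots> = (\<Sum>T\<in>Pow {1..m}. real (card {ws \<in> obeying n m. agree m vs ws = T}) * h T)"
  proof (rule sum.cong[OF refl])
    fix T assume "T \<in> Pow {1..m}"
    have "(\<Sum>ws\<in>{ws \<in> obeying n m. agree m vs ws = T}. h (agree m vs ws)) = (\<Sum>ws\<in>{ws \<in> obeying n m. agree m vs ws = T}. h T)"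
      by (rule sum.cong) auto
    then show "(\<Sum>ws\<in>{ws \<in> obeying n m. agree m vs ws = T}. h (agree m vs ws)) = real (card {ws \<in> obeying n m. agree m vs ws = T}) * h T"
      by simp
  qed
  also have "\<dots> \<le> (\<Sum>T\<in>Pow {1..m}. real ((n div m) ^ (m - card T)) * h T)"
  proof (rule sum_mono)
    fix T assume T: "T \<in> Pow {1..m}"
    have "real (card {ws \<in> obeying n m. agree m vs ws = T}) \<le> real ((n div m) ^ (m - card T))"
      using count_agree[OF s vs] T by (intro of_nat_mono) auto
    then show "real (card {ws \<in> obeying n m. agree m vs ws = T}) * h T \<le> real ((n div m) ^ (m - card T)) * h T"
      using h0 T by (intro mult_right_mono) auto
  qed
  finally show ?thesis .
qed




lemma card_as_sum:
  assumes "finite A" "C \<subseteq> A"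
  shows "real (card C) = (\<Sum>x\<in>A. if x \<in> C then 1 else 0)"
proof -
  have "(\<Sum>x\<in>A. if x \<in> C then 1 else (0::real)) = (\<Sum>x\<in>A \<inter> C. 1)"
    using assms(1) by (simp add: sum.inter_restrict[symmetric] indicator_def)
  also have "A \<inter> C = C" using assms(2) by blast
  finally show ?thesis by simp
qed

context
  fixes n m :: nat and EH :: "nat set set" and p \<alpha> :: real
  assumes s_pos: "0 < n div m" and EH: "EH \<subseteq> all_edges m" and p0: "0 < p" and p1: "p < 1"
    and bal: "\<And>T. T \<subseteq> {1..m} \<Longrightarrow> T \<noteq> {} \<Longrightarrow> avg_deg EH T \<le> \<alpha>" and a0: "0 \<le> \<alpha>"
begin

abbreviation "Wt \<equiv> wt p (all_edges n)"
abbreviation "Cop E \<equiv> induced_copies n m EH E"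

lemma mean_X:
  "(\<Sum>E\<in>Pow (all_edges n). Wt E * real (card (Cop E))) = real ((n div m) ^ m) * qH p m EH"
proof -
  have "(\<Sum>E\<in>Pow (all_edges n). Wt E * real (card (Cop E)))
      = (\<Sum>E\<in>Pow (all_edges n). \<Sum>vs\<in>obeying n m. Wt E * (if vs \<in> Cop E then 1 else 0))"
    by (intro sum.cong refl) (simp add: card_as_sum[OF finite_obeying copies_sub] sum_distrib_left)
  also have "\<dots> = (\<Sum>vs\<in>obeying n m. \<Sum>E\<in>Pow (all_edges n). Wt E * (if vs \<in> Cop E then 1 else 0))"
    by (rule sum.swap)
  also have "\<dots> = (\<Sum>vs\<in>obeying n m. qH p m EH)"
  proof (rule sum.cong[OF refl])
    fix vs assume vs: "vs \<in> obeying n m"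
    have "(\<Sum>E\<in>Pow (all_edges n). Wt E * (\<lambda>_. 1::real) (plant m EH vs E)) * qH p m EH
       = (\<Sum>E\<in>Pow (all_edges n). Wt E * (if vs \<in> Cop E then (\<lambda>_. 1::real) E else 0))"
      by (rule plant_sum[OF s_pos EH p0 p1 vs])
    then show "(\<Sum>E\<in>Pow (all_edges n). Wt E * (if vs \<in> Cop E then 1 else 0)) = qH p m EH"
      using wt_sum1[OF finite_all_edges] by simp
  qed
  also have "\<dots> = real ((n div m) ^ m) * qH p m EH" by (simp add: card_obeying)
  finally show ?thesis .
qed

lemma second_X:
  assumes half: "1 / 2 \<le> (1 - p) ^ (m^2)"
  defines "Y \<equiv> 1 / (p powr (\<alpha> / 2))"
  shows "(\<Sum>E\<in>Pow (all_edges n). Wt E * real (card (Cop E))^2)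
     \<le> (real ((n div m) ^ m) * qH p m EH)^2 * (2 * (1 + Y / real (n div m)) ^ m - 1)"
proof -
  let ?O = "obeying n m" let ?s = "real (n div m)"
  define hh where "hh T = (if T = {} then 1 else 2 * Y ^ card T)" for T :: "nat set"
  have Y0: "0 < Y" unfolding Y_def using p0 by simp
  have s0: "0 < ?s" using s_pos by simp
  have G_le: "Gf p \<alpha> (card T) \<le> hh T" if T: "T \<subseteq> {1..m}" for T
  proof (cases "T = {}")
    case True then show ?thesis by (simp add: Gf_def hh_def)
  next
    case False
    have "card T \<le> m" using card_mono[OF _ T] by simp
    then have "card T ^ 2 \<le> m ^ 2" by (simp add: power_mono)
    then have "(1 - p) ^ (m^2) \<le> (1 - p) ^ (card T ^ 2)" using p0 p1 by (intro power_decreasing) auto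
    then have h2: "1 / 2 \<le> (1 - p) ^ (card T ^ 2)" using half by linarith
    have pp: "0 < (p powr (\<alpha> / 2)) ^ card T" using p0 by simp
    have "Gf p \<alpha> (card T) = 1 / ((p powr (\<alpha> / 2)) ^ card T) * (1 / (1 - p) ^ (card T ^ 2))"
      by (simp add: Gf_def)
    also have "\<dots> \<le> 1 / ((p powr (\<alpha> / 2)) ^ card T) * 2"
      using h2 pp p1 by (intro mult_left_mono) (auto simp: field_simps)
    also have "\<dots> = hh T" unfolding hh_def Y_def using False by (simp add: power_one_over)
    finally show ?thesis .
  qed
  have inner: "(\<Sum>ws\<in>?O. Gf p \<alpha> (card (agree m vs ws))) \<le> 2 * (Y + ?s) ^ m - ?s ^ m"
    if vs: "vs \<in> ?O" for vs
  proof -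
    have "(\<Sum>ws\<in>?O. Gf p \<alpha> (card (agree m vs ws))) \<le> (\<Sum>ws\<in>?O. hh (agree m vs ws))"
      by (intro sum_mono G_le) (auto simp: agree_def)
    also have "\<dots> \<le> (\<Sum>T\<in>Pow {1..m}. real ((n div m) ^ (m - card T)) * hh T)"
      by (rule sum_agree[OF s_pos vs]) (simp add: hh_def Y0 less_imp_le)
    also have "\<dots> = (\<Sum>T\<in>Pow {1..m}. 2 * (Y ^ card T * ?s ^ (card {1..m} - card T)) - (if T = {} then ?s ^ m else 0))"
      by (intro sum.cong refl) (simp add: hh_def)
    also have "\<dots> = 2 * (Y + ?s) ^ m - ?s ^ m"
    proof -
      have ps: "(\<Sum>T\<in>Pow {1..m}. Y ^ card T * ?s ^ (m - card T)) = (Y + ?s) ^ m"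
      proof -
        have c: "card {1..m} = m" by simp
        have "finite {1..m}" by simp
        from pow_sum[OF this, of Y ?s] show ?thesis unfolding c .
      qed
      show ?thesis using ps by (simp add: sum_subtractf sum_distrib_left[symmetric])
    qed
    finally show ?thesis .
  qed
  have "(\<Sum>E\<in>Pow (all_edges n). Wt E * real (card (Cop E))^2)
      = (\<Sum>E\<in>Pow (all_edges n). \<Sum>vs\<in>?O. \<Sum>ws\<in>?O. Wt E * (if vs \<in> Cop E \<and> ws \<in> Cop E then 1 else 0))"
  proof (intro sum.cong refl)
    fix E
    have "real (card (Cop E))^2 = (\<Sum>vs\<in>?O. if vs \<in> Cop E then 1 else 0) * (\<Sum>ws\<in>?O. if ws \<in> Cop E then 1 else 0)"
      unfolding power2_eq_square card_as_sum[OF finite_obeying copies_sub] ..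
    also have "\<dots> = (\<Sum>vs\<in>?O. \<Sum>ws\<in>?O. if vs \<in> Cop E \<and> ws \<in> Cop E then 1 else 0)"
      unfolding sum_product by (intro sum.cong refl) simp
    finally show "Wt E * real (card (Cop E))^2 = (\<Sum>vs\<in>?O. \<Sum>ws\<in>?O. Wt E * (if vs \<in> Cop E \<and> ws \<in> Cop E then 1 else 0))"
      by (simp add: sum_distrib_left)
  qed
  also have "\<dots> = (\<Sum>vs\<in>?O. \<Sum>ws\<in>?O. \<Sum>E\<in>Pow (all_edges n). Wt E * (if vs \<in> Cop E \<and> ws \<in> Cop E then 1 else 0))"
    by (subst sum.swap) (rule sum.cong[OF refl], rule sum.swap)
  also have "\<dots> \<le> (\<Sum>vs\<in>?O. \<Sum>ws\<in>?O. (qH p m EH)^2 * Gf p \<alpha> (card (agree m vs ws)))"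
    by (intro sum_mono pair_G[OF s_pos EH p0 p1 bal a0]) auto
  also have "\<dots> = (qH p m EH)^2 * (\<Sum>vs\<in>?O. \<Sum>ws\<in>?O. Gf p \<alpha> (card (agree m vs ws)))"
    by (simp add: sum_distrib_left)
  also have "\<dots> \<le> (qH p m EH)^2 * (\<Sum>vs\<in>?O. 2 * (Y + ?s) ^ m - ?s ^ m)"
    by (intro mult_left_mono sum_mono inner) auto
  also have "\<dots> = (qH p m EH)^2 * (?s ^ m * (2 * (Y + ?s) ^ m - ?s ^ m))"
    by (simp add: card_obeying)
  also have "\<dots> = (real ((n div m) ^ m) * qH p m EH)^2 * (2 * (1 + Y / ?s) ^ m - 1)"
  proof -
    have e: "Y + ?s = ?s * (1 + Y / ?s)" using s0 by (simp add: field_simps)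
    have "(Y + ?s) ^ m = ?s ^ m * (1 + Y / ?s) ^ m" by (subst e) (rule power_mult_distrib)
    then show ?thesis by (simp add: power2_eq_square algebra_simps)
  qed
  finally show ?thesis .
qed

end



lemma obeying_ne: "0 < n div m \<Longrightarrow> obeying n m \<noteq> {}"
  using card_obeying[of n m] by (metis card.empty power_not_zero less_numeral_extra(3))

context
  fixes n m :: nat and EH :: "nat set set" and p :: real
  assumes s_pos: "0 < n div m" and EH: "EH \<subseteq> all_edges m" and p0: "0 < p" and p1: "p < 1"
begin

definition FF :: "nat \<Rightarrow> nat \<Rightarrow> (nat set set \<Rightarrow> bool) \<Rightarrow> nat set set \<Rightarrow> (nat \<Rightarrow> nat) \<Rightarrow> real" where
  "FF k k' f E vs = measure_pmf.prob (finish n k k' E (vs ` {1..m})) {G. f G}"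

lemma PH_eq:
  "measure_pmf.prob (GH_dist n p m EH k k') {G. f G}
   = (\<Sum>E\<in>Pow (all_edges n). wt p (all_edges n) E * (\<Sum>vs\<in>induced_copies n m EH E. FF k k' f E vs))
     / (real ((n div m) ^ m) * qH p m EH)"
proof -
  let ?O = "obeying n m" let ?W = "wt p (all_edges n)" let ?N = "real ((n div m) ^ m)"
  have fO: "finite ?O" by (rule finite_obeying)
  have neO: "?O \<noteq> {}" by (rule obeying_ne[OF s_pos])
  have cO: "real (card ?O) = ?N" by (simp add: card_obeying)
  have q0: "0 < qH p m EH" unfolding qH_def using p0 p1 by simp
  have N0: "0 < ?N" using s_pos by simp
  have inner: "measure_pmf.expectation (pmf_of_set ?O) (\<lambda>vs. measure_pmf.prob (finish n k k' (plant m EH vs E) (vs ` {1..m})) {G. f G})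
      = (\<Sum>vs\<in>?O. FF k k' f (plant m EH vs E) vs) / ?N" for E
    unfolding FF_def by (simp add: integral_pmf_of_set[OF neO fO] cO)
  have "measure_pmf.prob (GH_dist n p m EH k k') {G. f G}
      = (\<Sum>E\<in>Pow (all_edges n). ?W E * ((\<Sum>vs\<in>?O. FF k k' f (plant m EH vs E) vs) / ?N))"
    unfolding GH_dist_def prob_bind gnp_expect[OF p0 p1] inner ..
  also have "\<dots> = (\<Sum>vs\<in>?O. \<Sum>E\<in>Pow (all_edges n). ?W E * FF k k' f (plant m EH vs E) vs) / ?N"
    by (simp add: sum_divide_distrib sum_distrib_left sum.swap[of _ ?O])
  also have "\<dots> = (\<Sum>vs\<in>?O. (\<Sum>E\<in>Pow (all_edges n). ?W E * (if vs \<in> induced_copies n m EH E then FF k k' f E vs else 0)) / qH p m EH) / ?N"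
  proof -
    have "(\<Sum>E\<in>Pow (all_edges n). ?W E * FF k k' f (plant m EH vs E) vs)
        = (\<Sum>E\<in>Pow (all_edges n). ?W E * (if vs \<in> induced_copies n m EH E then FF k k' f E vs else 0)) / qH p m EH"
      if vs: "vs \<in> ?O" for vs
      using plant_sum[OF s_pos EH p0 p1 vs, of "\<lambda>G. FF k k' f G vs"] q0 by (simp add: field_simps)
    then show ?thesis by (intro arg_cong2[where f="(/)"] sum.cong refl) auto
  qed
  also have "\<dots> = (\<Sum>E\<in>Pow (all_edges n). \<Sum>vs\<in>?O. ?W E * (if vs \<in> induced_copies n m EH E then FF k k' f E vs else 0)) / (?N * qH p m EH)"
    by (simp add: sum_divide_distrib[symmetric] sum.swap[of _ ?O] sum_distrib_left)
  also have "\<dots> = (\<Sum>E\<in>Pow (all_edges n). ?W E * (\<Sum>vs\<in>induced_copies n m EH E. FF k k' f E vs)) / (?N * qH p m EH)"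
  proof -
    have "(\<Sum>vs\<in>?O. ?W E * (if vs \<in> induced_copies n m EH E then FF k k' f E vs else 0))
        = ?W E * (\<Sum>vs\<in>induced_copies n m EH E. FF k k' f E vs)" for E
    proof -
      have "(\<Sum>vs\<in>?O. (if vs \<in> induced_copies n m EH E then FF k k' f E vs else 0))
          = (\<Sum>vs\<in>?O \<inter> induced_copies n m EH E. FF k k' f E vs)"
        using fO by (simp add: sum.inter_restrict)
      also have "?O \<inter> induced_copies n m EH E = induced_copies n m EH E" using copies_sub by blast
      finally have h: "(\<Sum>vs\<in>?O. (if vs \<in> induced_copies n m EH E then FF k k' f E vs else 0))
          = (\<Sum>vs\<in>induced_copies n m EH E. FF k k' f E vs)" .
      show ?thesis by (subst sum_distrib_left[symmetric]) (simp only: h)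
    qed
    then show ?thesis by simp
  qed
  finally show ?thesis .
qed

definition Psi :: "nat \<Rightarrow> nat \<Rightarrow> (nat set set \<Rightarrow> bool) \<Rightarrow> nat set set \<Rightarrow> real" where
  "Psi k k' f E = measure_pmf.prob (if induced_copies n m EH E = {}
       then map_pmf (del_inside E) (pmf_of_set (ksets {1..n} k))
       else bind_pmf (pmf_of_set (induced_copies n m EH E)) (\<lambda>vs.
              finish n k k' E (vs ` {1..m}))) {G. f G}"

lemma PA_eq:
  "measure_pmf.prob (AHG_dist n p m EH k k') {G. f G}
   = (\<Sum>E\<in>Pow (all_edges n). wt p (all_edges n) E * Psi k k' f E)"
proof -
  have "measure_pmf.prob (AHG_dist n p m EH k k') {G. f G} = measure_pmf.expectation (gnp n p) (Psi k k' f)"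
    unfolding AHG_dist_def prob_bind Psi_def ..
  then show ?thesis using gnp_expect[OF p0 p1] by simp
qed

lemma Psi_bounds: "0 \<le> Psi k k' f E \<and> Psi k k' f E \<le> 1"
  unfolding Psi_def by simp

lemma Psi_sum: "(\<Sum>vs\<in>induced_copies n m EH E. FF k k' f E vs) = real (card (induced_copies n m EH E)) * Psi k k' f E"
proof (cases "induced_copies n m EH E = {}")
  case True then show ?thesis by simp
next
  case False
  have fC: "finite (induced_copies n m EH E)" using finite_subset[OF copies_sub finite_obeying] .
  then have "0 < card (induced_copies n m EH E)" using False by (simp add: card_gt_0_iff)
  moreover have "Psi k k' f E = (\<Sum>vs\<in>induced_copies n m EH E. FF k k' f E vs) / real (card (induced_copies n m EH E))"
    unfolding Psi_def FF_def using False fC by (simp add: prob_bind integral_pmf_of_set)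
  ultimately show ?thesis by simp
qed

end



lemma eventually_conds:
  fixes e1 e2 \<epsilon> :: real
  assumes "e1 < 0" "e2 < 0" "0 < \<epsilon>"
  shows "\<exists>N0. \<forall>n \<ge> N0. 2 \<le> n \<and> real n powr e1 \<le> 1/2 \<and> real n powr e2 \<le> \<epsilon>"
proof -
  have t1: "((\<lambda>n. real n powr e1) \<longlongrightarrow> 0) sequentially"
    by (rule tendsto_neg_powr[OF assms(1) filterlim_real_sequentially])
  have t2: "((\<lambda>n. real n powr e2) \<longlongrightarrow> 0) sequentially"
    by (rule tendsto_neg_powr[OF assms(2) filterlim_real_sequentially])
  have ev1: "eventually (\<lambda>n. real n powr e1 < 1/2) sequentially" by (rule order_tendstoD(2)[OF t1]) simp
  have ev2: "eventually (\<lambda>n. real n powr e2 < \<epsilon>) sequentially" by (rule order_tendstoD(2)[OF t2 assms(3)])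
  have ev3: "eventually (\<lambda>n. 2 \<le> n) sequentially" by (rule eventually_ge_at_top)
  have "eventually (\<lambda>n. 2 \<le> n \<and> real n powr e1 \<le> 1/2 \<and> real n powr e2 \<le> \<epsilon>) sequentially"
    using ev1 ev2 ev3 by eventually_elim auto
  then show ?thesis unfolding eventually_sequentially .
qed

theorem theoremC2:
  fixes \<delta> \<epsilon> \<alpha> \<rho> \<beta> :: real
  assumes "0 < \<delta>" "\<delta> < 1" "0 < \<epsilon>" "\<epsilon> < 1/7"
    and "2 < \<alpha>" "\<alpha> < min (2 / (1 - \<delta>)) 3"
    and "0 < \<rho>" "\<rho> < min ((1 - \<delta>) / 2) ((2 - \<alpha> * (1 - \<delta>)) / 4)"
    and "0 \<le> \<beta>" "\<beta> < 1"
  shows "\<exists>N. \<forall>n \<ge> N. \<forall>(m::nat) (EH::nat set set) (k::nat) (k'::nat) (f::nat set set \<Rightarrow> bool).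
     real m = real n powr \<rho> \<and> m dvd n \<and> balanced_graph m EH \<alpha> \<and> has_indep_set m EH k'
     \<and> k' \<le> k \<and> k \<le> n - m \<longrightarrow>
     measure_pmf.prob (GH_dist n (real n powr (\<delta> - 1)) m EH k k') {G. f G}
       \<ge> \<beta> * (measure_pmf.prob (AHG_dist n (real n powr (\<delta> - 1)) m EH k k') {G. f G}
               - 4 * \<epsilon> / (1 - \<beta>)^2)"
proof -
  define e1 where "e1 = 2 * \<rho> + \<delta> - 1"
  define e2 where "e2 = 2 * \<rho> - 1 + (1 - \<delta>) * \<alpha> / 2"
  have e1: "e1 < 0" unfolding e1_def using assms by simp
  have r4: "4 * \<rho> < 2 - \<alpha> * (1 - \<delta>)" using assms(8) by simp
  have r4': "4 * \<rho> < 2 - \<alpha> + \<alpha> * \<delta>" using r4 by (simp add: algebra_simps)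
  have eq: "e2 = 2 * \<rho> - 1 + \<alpha> / 2 - (\<alpha> * \<delta>) / 2" unfolding e2_def by (simp add: field_simps)
  have e2: "e2 < 0" unfolding eq using r4' by linarith
  obtain N0 where N0: "\<forall>n \<ge> N0. 2 \<le> n \<and> real n powr e1 \<le> 1/2 \<and> real n powr e2 \<le> \<epsilon>"
    using eventually_conds[OF e1 e2 assms(3)] by blast
  show ?thesis
  proof (intro exI allI impI)
    fix n m EH k k' f
    assume n: "N0 \<le> n"
    assume H: "real m = real n powr \<rho> \<and> m dvd n \<and> balanced_graph m EH \<alpha> \<and> has_indep_set m EH k'
     \<and> k' \<le> k \<and> k \<le> n - m"
    have n2: "2 \<le> n" and c1: "real n powr e1 \<le> 1/2" and c2: "real n powr e2 \<le> \<epsilon>" using N0 n by auto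
    have mr: "real m = real n powr \<rho>" and mdvd: "m dvd n" and bg: "balanced_graph m EH \<alpha>" using H by auto
    define p where "p = real n powr (\<delta> - 1)"
    have n1: "1 < real n" using n2 by simp
    have p0: "0 < p" unfolding p_def using n1 by simp
    have p1: "p < 1" unfolding p_def using n1 assms(2) by (intro powr_less_one) auto
    have m1: "1 \<le> real m" unfolding mr using n1 assms(7) by (intro ge_one_powr_ge_zero) auto
    have "\<rho> * 2 < 1 - \<delta>" using assms(8) by simp
    then have r1: "\<rho> \<le> 1" using assms(1) by linarith
    have "real n powr \<rho> \<le> real n powr 1" using n1 r1 by (intro powr_mono) auto
    then have mn: "real m \<le> real n" unfolding mr using n1 by simp
    show "measure_pmf.prob (GH_dist n (real n powr (\<delta> - 1)) m EH k k') {G. f G}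
       \<ge> \<beta> * (measure_pmf.prob (AHG_dist n (real n powr (\<delta> - 1)) m EH k k') {G. f G}
               - 4 * \<epsilon> / (1 - \<beta>)^2)"
    proof -
    have mpos: "0 < m" using m1 by simp
    obtain q where q: "n = m * q" using mdvd by blast
    have "0 < q" using q n2 by (cases q) auto
    then have s_nat: "0 < n div m" using q mpos by simp
    have sr: "real (n div m) = real n / real m" using mdvd by (simp add: real_of_nat_div)
    have EHs: "EH \<subseteq> all_edges m" and bal: "\<And>T. T \<subseteq> {1..m} \<Longrightarrow> T \<noteq> {} \<Longrightarrow> avg_deg EH T \<le> \<alpha>"
      using bg unfolding balanced_graph_def by auto
    have a0: "0 \<le> \<alpha>" using assms(5) by simp
    have n0: "0 < real n" using n1 by simp
    have mp: "real (m^2) * p = real n powr e1"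
    proof -
      have "real (m^2) * p = real n powr \<rho> * real n powr \<rho> * real n powr (\<delta> - 1)"
        unfolding p_def of_nat_power mr by (simp add: power2_eq_square)
      also have "\<dots> = real n powr (\<rho> + \<rho> + (\<delta> - 1))" by (simp only: powr_add)
      also have "\<rho> + \<rho> + (\<delta> - 1) = e1" unfolding e1_def by simp
      finally show ?thesis .
    qed
    have half: "1 / 2 \<le> (1 - p) ^ (m^2)"
    proof -
      have "1 + real (m^2) * (- p) \<le> (1 + - p) ^ (m^2)" using p1 p0 by (intro Bernoulli_inequality) auto
      then show ?thesis using mp c1 by simp
    qed
    define Y where "Y = 1 / (p powr (\<alpha> / 2))"
    define s where "s = real (n div m)"
    have s0: "0 < s" unfolding s_def using s_nat by simp
    have Y0: "0 < Y" unfolding Y_def using p0 by simp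
    have Yeq: "real m * (Y / s) = real n powr e2"
    proof -
      have "p powr (\<alpha> / 2) = real n powr ((\<delta> - 1) * (\<alpha> / 2))" unfolding p_def by (simp add: powr_powr)
      then have Y': "Y = real n powr (- ((\<delta> - 1) * (\<alpha> / 2)))" unfolding Y_def by (simp add: powr_minus_divide)
      have ee: "e2 = \<rho> + \<rho> + (- ((\<delta> - 1) * (\<alpha> / 2))) - 1"
        unfolding e2_def by (simp add: field_simps)
      have "real n powr e2 = real n powr (\<rho> + \<rho> + (- ((\<delta> - 1) * (\<alpha> / 2))) - 1)"
        by (simp only: ee)
      also have "\<dots> = real n powr \<rho> * real n powr \<rho> * real n powr (- ((\<delta> - 1) * (\<alpha> / 2))) / real n powr 1"
        by (simp only: powr_add powr_diff)
      also have "\<dots> = real n powr \<rho> * real n powr \<rho> * Y / real n"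
        unfolding Y'[symmetric] using n0 by simp
      also have "\<dots> = real m * (Y / s)" unfolding s_def sr mr using n0 mpos mr by (simp add: field_simps)
      finally show ?thesis by simp
    qed
    have x0: "0 \<le> real m * (Y / s)" using Y0 s0 by simp
    have "(1 + Y / s) ^ m = (1 + (real m * (Y / s)) / real m) ^ m" using mpos by simp
    also have "\<dots> \<le> exp (real m * (Y / s))"
      using x0 mpos by (intro exp_ge_one_plus_x_over_n_power_n) auto
    also have "\<dots> \<le> 1 + 2 * (real m * (Y / s))"
      using x0 Yeq c2 assms(4) by (intro real_exp_bound_lemma) auto
    finally have pw: "(1 + Y / s) ^ m \<le> 1 + 2 * \<epsilon>" using Yeq c2 by linarith
    define mu where "mu = real ((n div m) ^ m) * qH p m EH"
    have q0: "0 < qH p m EH" unfolding qH_def using p0 p1 by simp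
    have mu0: "0 < mu" unfolding mu_def using q0 s_nat by simp
    have sec0: "(\<Sum>E\<in>Pow (all_edges n). wt p (all_edges n) E * real (card (induced_copies n m EH E))^2)
       \<le> mu^2 * (2 * (1 + Y / s) ^ m - 1)"
      unfolding mu_def Y_def s_def by (rule second_X[OF s_nat EHs p0 p1 bal a0 half])
    also have "\<dots> \<le> mu^2 * (1 + 4 * \<epsilon>)" using pw by (intro mult_left_mono) auto
    finally have sec: "(\<Sum>E\<in>Pow (all_edges n). wt p (all_edges n) E * real (card (induced_copies n m EH E))^2)
       \<le> (1 + 4 * \<epsilon>) * mu^2" by (simp add: mult.commute)
    have mean: "(\<Sum>E\<in>Pow (all_edges n). wt p (all_edges n) E * real (card (induced_copies n m EH E))) = mu"
      unfolding mu_def by (rule mean_X[OF s_nat EHs p0 p1 bal a0])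
    have asm: "(\<Sum>E\<in>Pow (all_edges n). wt p (all_edges n) E * (real (card (induced_copies n m EH E)) * Psi n m EH k k' f E)) / mu
        \<ge> \<beta> * ((\<Sum>E\<in>Pow (all_edges n). wt p (all_edges n) E * Psi n m EH k k' f E) - 4 * \<epsilon> / (1 - \<beta>)^2)"
      by (rule assembly[OF _ _ wt_sum1 mean sec mu0])
         (auto simp: finite_all_edges wt_nonneg p0 p1 less_imp_le Psi_bounds[OF s_nat EHs p0 p1] assms(9,10))
    have fin: "measure_pmf.prob (GH_dist n p m EH k k') {G. f G}
       \<ge> \<beta> * (measure_pmf.prob (AHG_dist n p m EH k k') {G. f G} - 4 * \<epsilon> / (1 - \<beta>)^2)"
      using asm unfolding PH_eq[OF s_nat EHs p0 p1] PA_eq[OF s_nat EHs p0 p1] Psi_sum[OF s_nat EHs p0 p1] mu_def .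
    then show ?thesis unfolding p_def .
    qed
  qed
qed



end
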